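(* Assume (H_coerc), (H_norm), (H_only-min). There exist $\delta_{Ham}>0$ and $\delta_{Lag}>0$ such that, for every solution $u:\mathbb R\to\mathbb R^n$ of $\mathcal Du''=\nabla V(u)$ defined on all of $\mathbb R$ whose Hamiltonian $\frac12|u'|_{\mathcal D}^2-V(u)$ lies in $[-\delta_{Ham},\delta_{Ham}]$, and for every $x_0\in\mathbb R$: if $[x_0,x_0+1]\cap\Sigma_{Esc}[u]\ne\emptyset$ then $\int_{x_0}^{x_0+1}\bigl(\frac12|u'(x)|_{\mathcal D}^2+V(u(x))\bigr)dx\ge\delta_{Lag}$.
   Context: $n\ge1$; $\mathcal D$ a fixed $n\times n$ real symmetric positive definite matrix; $|v|_{\mathcal D}=\sqrt{v\cdot\mathcal Dv}$; $V:\mathbb R^n\to\mathbb R$ of class $C^k$, $k\ge2$. (H_coerc) $\lim_{R\to\infty}\inf_{|u|\ge R}u\cdot\nabla V(u)/|u|^2>0$. (H_norm) $V$ has a nondegenerate minimum point in $V^{-1}(\{0\})$. (H_only-min) every critical point of $V$ in $V^{-1}(\{0\})$ has positive definite Hessian. $\mathcal M_0$ = critical points of $V$ in $V^{-1}(\{0\})$. Let $\lambda_{\min}$ ($\lambda_{\max}$) be the minimum (maximum) eigenvalue among all $D^2V(m)$, $m\in\mathcal M_0$; $d_{Esc}>0$ is fixed small enough that for every $m\in\mathcal M_0$ and $|u-m|_{\mathcal D}\le d_{Esc}$, all eigenvalues of $D^2V(u)$ lie in $[\lambda_{\min}/2,2\lambda_{\max}]$. $\Sigma_{Esc}[u]=\{x\in\mathbb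 R:|u(x)-m|_{\mathcal D}>d_{Esc}\text{ for all }m\in\mathcal M_0\}$. *)

theory Defs
  imports "HOL-Analysis.Analysis" "HOL-Library.Extended_Real"
begin

definition normD :: "real^'n^'n \<Rightarrow> real^'n \<Rightarrow> real" where
  "normD D v = sqrt (v \<bullet> (D *v v))"

definition pos_def_mat :: "real^'n^'n \<Rightarrow> bool" where
  "pos_def_mat A \<longleftrightarrow> (\<forall>v. v \<noteq> 0 \<longrightarrow> 0 < v \<bullet> (A *v v))"

definition mat_eigenvalues :: "real^'n^'n \<Rightarrow> real set" where
  "mat_eigenvalues A = {l. \<exists>v. v \<noteq> 0 \<and> A *v v = l *s v}"

definition C2_with :: "(real^'n \<Rightarrow> real) \<Rightarrow> (real^'n \<Rightarrow> real^'n) \<Rightarrow> (real^'n \<Rightarrow> real^'n^'n) \<Rightarrow> bool" where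
  "C2_with V gradV HessV \<longleftrightarrow>
     (\<forall>u. (V has_derivative (\<lambda>h. gradV u \<bullet> h)) (at u)) \<and>
     (\<forall>u. (gradV has_derivative (\<lambda>h. HessV u *v h)) (at u)) \<and>
     continuous_on UNIV HessV"

definition H_coerc :: "(real^'n \<Rightarrow> real^'n) \<Rightarrow> bool" where
  "H_coerc gradV \<longleftrightarrow> (\<exists>L::ereal. L > 0 \<and>
     ((\<lambda>R::real. INF u\<in>{u. norm u \<ge> R}. ereal (u \<bullet> gradV u / (norm u)\<^sup>2)) \<longlongrightarrow> L) at_top)"

definition M0 :: "(real^'n \<Rightarrow> real) \<Rightarrow> (real^'n \<Rightarrow> real^'n) \<Rightarrow> (real^'n) set" where
  "M0 V gradV = {m. V m = 0 \<and> gradV m = 0}"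

definition H_norm :: "(real^'n \<Rightarrow> real) \<Rightarrow> (real^'n \<Rightarrow> real^'n^'n) \<Rightarrow> bool" where
  "H_norm V HessV \<longleftrightarrow> (\<exists>m. V m = 0 \<and> (\<forall>\<^sub>F u in at m. V m \<le> V u) \<and> invertible (HessV m))"

definition H_only_min :: "(real^'n \<Rightarrow> real) \<Rightarrow> (real^'n \<Rightarrow> real^'n) \<Rightarrow> (real^'n \<Rightarrow> real^'n^'n) \<Rightarrow> bool" where
  "H_only_min V gradV HessV \<longleftrightarrow> (\<forall>m\<in>M0 V gradV. pos_def_mat (HessV m))"

definition lambda_min :: "(real^'n \<Rightarrow> real) \<Rightarrow> (real^'n \<Rightarrow> real^'n) \<Rightarrow> (real^'n \<Rightarrow> real^'n^'n) \<Rightarrow> real" where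
  "lambda_min V gradV HessV = Inf (\<Union>m\<in>M0 V gradV. mat_eigenvalues (HessV m))"

definition lambda_max :: "(real^'n \<Rightarrow> real) \<Rightarrow> (real^'n \<Rightarrow> real^'n) \<Rightarrow> (real^'n \<Rightarrow> real^'n^'n) \<Rightarrow> real" where
  "lambda_max V gradV HessV = Sup (\<Union>m\<in>M0 V gradV. mat_eigenvalues (HessV m))"

definition d_Esc_ok :: "real^'n^'n \<Rightarrow> (real^'n \<Rightarrow> real) \<Rightarrow> (real^'n \<Rightarrow> real^'n) \<Rightarrow> (real^'n \<Rightarrow> real^'n^'n) \<Rightarrow> real \<Rightarrow> bool" where
  "d_Esc_ok D V gradV HessV d \<longleftrightarrow> d > 0 \<and>
     (\<forall>m\<in>M0 V gradV. \<forall>u. normD D (u - m) \<le> d \<longrightarrow>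
        mat_eigenvalues (HessV u) \<subseteq> {lambda_min V gradV HessV / 2 .. 2 * lambda_max V gradV HessV})"

definition Sigma_Esc :: "real^'n^'n \<Rightarrow> (real^'n \<Rightarrow> real) \<Rightarrow> (real^'n \<Rightarrow> real^'n) \<Rightarrow> real \<Rightarrow> (real \<Rightarrow> real^'n) \<Rightarrow> real set" where
  "Sigma_Esc D V gradV d u = {x. \<forall>m\<in>M0 V gradV. normD D (u x - m) > d}"

end

theory Submission
  imports Defs
begin

lemma cont_quad: "continuous_on S (\<lambda>v::real^'n. v \<bullet> (D *v v))"
  by (intro continuous_intros linear_continuous_on matrix_vector_mul_bounded_linear)

lemma quad_scale: "(c *\<^sub>R v) \<bullet> (D *v (c *\<^sub>R v)) = c^2 * (v \<bullet> (D *v v))" for D :: "real^'n^'n"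
  by (simp add: matrix_vector_mult_scaleR power2_eq_square)

lemma posdef_lower:
  fixes D :: "real^'n^'n" assumes "pos_def_mat D"
  shows "\<exists>a>0. \<forall>v. a * (norm v)^2 \<le> v \<bullet> (D *v v)"
proof -
  have ne: "sphere (0::real^'n) 1 \<noteq> {}" by simp
  obtain v0 where v0: "v0 \<in> sphere 0 1" "\<forall>y\<in>sphere 0 1. v0 \<bullet> (D *v v0) \<le> y \<bullet> (D *v y)"
    using continuous_attains_inf[OF compact_sphere ne cont_quad] by blast
  have a: "v0 \<bullet> (D *v v0) > 0" using v0(1) assms unfolding pos_def_mat_def by (metis mem_sphere_0 norm_zero zero_neq_one)
  show ?thesis
  proof (intro exI[of _ "v0 \<bullet> (D *v v0)"] conjI allI a)
    fix v :: "real^'n"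
    show "v0 \<bullet> (D *v v0) * (norm v)^2 \<le> v \<bullet> (D *v v)"
    proof (cases "v = 0")
      case True then show ?thesis by simp
    next
      case False
      let ?w = "(1/norm v) *\<^sub>R v"
      have "?w \<in> sphere 0 1" using False by (simp add: norm_divide)
      then have "v0 \<bullet> (D *v v0) \<le> ?w \<bullet> (D *v ?w)" using v0 by blast
      also have "\<dots> = (1/norm v)^2 * (v \<bullet> (D *v v))" by (rule quad_scale)
      finally have "v0 \<bullet> (D *v v0) * (norm v)^2 \<le> (1/norm v)^2 * (v \<bullet> (D *v v)) * (norm v)^2"
        by (simp add: mult_right_mono)
      also have "\<dots> = v \<bullet> (D *v v)" using False by (simp add: field_simps)
      finally show ?thesis .
    qed
  qed
qed

lemma upper_D:
  fixes D :: "real^'n^'n"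
  shows "\<exists>b\<ge>1. \<forall>v. norm (D *v v) \<le> b * norm v"
proof -
  obtain K where K: "\<forall>x. norm (D *v x) \<le> norm x * K"
    using bounded_linear.bounded[OF matrix_vector_mul_bounded_linear[of D]] by blast
  show ?thesis
    apply (intro exI[of _ "max 1 K"] conjI allI)
     apply simp
    by (metis K max.cobounded2 mult.commute mult_right_mono norm_ge_zero order_trans)
qed

lemma coerc_lin:
  fixes gradV :: "real^'n \<Rightarrow> real^'n"
  assumes "H_coerc gradV"
  shows "\<exists>R>0. \<exists>c>0. \<forall>u. norm u \<ge> R \<longrightarrow> u \<bullet> gradV u \<ge> c * (norm u)^2"
proof -
  obtain L :: ereal where L: "L > 0"
    "((\<lambda>R::real. INF u\<in>{u. norm u \<ge> R}. ereal (u \<bullet> gradV u / (norm u)\<^sup>2)) \<longlongrightarrow> L) at_top"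
    using assms unfolding H_coerc_def by blast
  obtain c where c: "0 < ereal c" "ereal c < L" using ereal_dense2[OF L(1)] by blast
  have "eventually (\<lambda>R. ereal c < (INF u\<in>{u. norm u \<ge> R}. ereal (u \<bullet> gradV u / (norm u)\<^sup>2))) at_top"
    using order_tendstoD(1)[OF L(2) c(2)] .
  then obtain N where N: "\<And>R. R \<ge> N \<Longrightarrow> ereal c < (INF u\<in>{u. norm u \<ge> R}. ereal (u \<bullet> gradV u / (norm u)\<^sup>2))"
    unfolding eventually_at_top_linorder by blast
  define R where "R = max N 1"
  have cpos: "c > 0" using c(1) by simp
  have Rpos: "R > 0" unfolding R_def by simp
  have "\<forall>u. norm u \<ge> R \<longrightarrow> u \<bullet> gradV u \<ge> c * (norm u)^2"
  proof (intro allI impI)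
    fix u :: "real^'n" assume u: "norm u \<ge> R"
    have "ereal c < (INF u\<in>{u. norm u \<ge> R}. ereal (u \<bullet> gradV u / (norm u)\<^sup>2))"
      using N[of R] R_def by simp
    also have "\<dots> \<le> ereal (u \<bullet> gradV u / (norm u)\<^sup>2)" by (rule INF_lower) (use u in simp)
    finally have "c < u \<bullet> gradV u / (norm u)\<^sup>2" by simp
    moreover have "norm u > 0" using u R_def by linarith
    ultimately show "u \<bullet> gradV u \<ge> c * (norm u)^2"
      by (simp add: field_simps)
  qed
  then show ?thesis using Rpos cpos by blast
qed

lemma sublevel_bounded:
  fixes V :: "real^'n \<Rightarrow> real" and gradV :: "real^'n \<Rightarrow> real^'n"
  assumes der: "\<And>u. (V has_derivative (\<lambda>h. gradV u \<bullet> h)) (at u)"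
    and "H_coerc gradV"
  shows "\<exists>R1. \<forall>q. V q < 1 \<longrightarrow> norm q \<le> R1"
proof -
  obtain R c where Rc: "R > 0" "c > 0" "\<And>u. norm u \<ge> R \<Longrightarrow> u \<bullet> gradV u \<ge> c * (norm u)^2"
    using coerc_lin[OF assms(2)] by blast
  have contV: "continuous_on UNIV V"
    using der has_derivative_continuous continuous_at_imp_continuous_on by blast
  obtain q0 where q0: "q0 \<in> cball 0 R" "\<forall>y\<in>cball 0 R. V q0 \<le> V y"
  proof -
    have ne: "cball (0::real^'n) R \<noteq> {}" using Rc(1) by simp
    have "continuous_on (cball 0 R) V" using contV continuous_on_subset by blast
    then show ?thesis using continuous_attains_inf[OF compact_cball ne] that by blast
  qed
  show ?thesis
  proof (intro exI[of _ "R + \<bar>1 - V q0\<bar> / (c * R)"] allI impI)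
    fix q :: "real^'n" assume Vq: "V q < 1"
    show "norm q \<le> R + \<bar>1 - V q0\<bar> / (c * R)"
    proof (rule ccontr)
      assume "\<not> ?thesis"
      then have big: "norm q > R + \<bar>1 - V q0\<bar> / (c * R)" by simp
      have cR: "c * R > 0" using Rc by simp
      have "\<bar>1 - V q0\<bar> / (c * R) \<ge> 0" using cR by simp
      then have nq: "norm q > R" using big by linarith
      define e where "e = (1 / norm q) *\<^sub>R q"
      have qnz: "q \<noteq> 0"
      proof
        assume "q = 0" then show False using nq Rc(1) by simp
      qed
      have ne: "norm e = 1" using qnz unfolding e_def by (simp add: norm_divide)
      have qe: "norm q *\<^sub>R e = q" using qnz unfolding e_def by simp
      have D: "DERIV (\<lambda>t. V (t *\<^sub>R e)) t :> gradV (t *\<^sub>R e) \<bullet> e" for t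
      proof -
        have "((\<lambda>t. V (t *\<^sub>R e)) has_derivative (\<lambda>h. gradV (t *\<^sub>R e) \<bullet> (h *\<^sub>R e))) (at t)"
          by (rule has_derivative_compose[OF _ der]) (auto intro!: derivative_eq_intros)
        then show ?thesis unfolding has_field_derivative_def
          by (rule has_derivative_eq_rhs) (auto simp: fun_eq_iff)
      qed
      obtain z where z: "R < z" "z < norm q"
        "V (norm q *\<^sub>R e) - V (R *\<^sub>R e) = (norm q - R) * (gradV (z *\<^sub>R e) \<bullet> e)"
        using MVT2[OF nq, of "\<lambda>t. V (t *\<^sub>R e)" "\<lambda>t. gradV (t *\<^sub>R e) \<bullet> e"] D by blast
      have nz: "norm (z *\<^sub>R e) = z" using ne z Rc(1) by simp
      have "(z *\<^sub>R e) \<bullet> gradV (z *\<^sub>R e) \<ge> c * z^2"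
        using Rc(3)[of "z *\<^sub>R e"] nz z by simp
      then have "z * (gradV (z *\<^sub>R e) \<bullet> e) \<ge> c * z * z"
        by (simp add: power2_eq_square inner_commute)
      then have "z * (c * z) \<le> z * (gradV (z *\<^sub>R e) \<bullet> e)" by (simp add: mult_ac)
      then have g: "gradV (z *\<^sub>R e) \<bullet> e \<ge> c * z" using z Rc(1)
        by (simp add: mult_le_cancel_left_pos)
      have "c * z \<ge> c * R" using z Rc by simp
      then have g2: "gradV (z *\<^sub>R e) \<bullet> e \<ge> c * R" using g by linarith
      have "V (R *\<^sub>R e) \<ge> V q0" using q0 ne Rc(1) by simp
      have mm: "(norm q - R) * (c * R) \<le> (norm q - R) * (gradV (z *\<^sub>R e) \<bullet> e)"
        by (rule mult_left_mono[OF g2]) (use nq in simp)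
      have "V q - V (R *\<^sub>R e) = (norm q - R) * (gradV (z *\<^sub>R e) \<bullet> e)" using z(3) qe by simp
      then have "V q \<ge> V q0 + (norm q - R) * (c * R)"
        using mm \<open>V (R *\<^sub>R e) \<ge> V q0\<close> by linarith
      moreover have "(norm q - R) * (c * R) > \<bar>1 - V q0\<bar>"
      proof -
        have "\<bar>1 - V q0\<bar> / (c * R) < norm q - R" using big by linarith
        then have "\<bar>1 - V q0\<bar> / (c * R) * (c * R) < (norm q - R) * (c * R)"
          using cR by (rule mult_strict_right_mono)
        moreover have "\<bar>1 - V q0\<bar> / (c * R) * (c * R) = \<bar>1 - V q0\<bar>" using cR by (auto simp: field_simps)
        ultimately show ?thesis by linarith
      qed
      ultimately show False using Vq by linarith
    qed
  qed
qed

lemma cpt_near: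
  fixes V :: "real^'n \<Rightarrow> real" and G :: "real^'n \<Rightarrow> real^'n"
  assumes cV: "continuous_on UNIV V" and cG: "continuous_on UNIV G" and eta: "\<eta> > 0"
    and K: "compact K"
  shows "\<exists>\<epsilon>>0. \<forall>q\<in>K. \<bar>V q\<bar> \<le> \<epsilon> \<longrightarrow> norm (G q) \<le> \<epsilon> \<longrightarrow>
            (\<exists>m. V m = 0 \<and> G m = 0 \<and> norm (q - m) < \<eta>)"
proof -
  define Z where "Z = {m. V m = 0 \<and> G m = 0}"
  define S where "S = K \<inter> (\<Inter>m\<in>Z. {q. \<eta> \<le> norm (q - m)})"
  have cl: "closed (\<Inter>m\<in>Z. {q. \<eta> \<le> norm (q - m)})"
    by (intro closed_INT ballI closed_Collect_le continuous_intros)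
  have cS: "compact S" unfolding S_def using compact_Int_closed[OF K cl] .
  have key: "\<exists>m. V m = 0 \<and> G m = 0 \<and> norm (q - m) < \<eta>" if "q \<in> K" "q \<notin> S" for q
    using that unfolding S_def Z_def by force
  show ?thesis
  proof (cases "S = {}")
    case True
    then show ?thesis using key by (intro exI[of _ 1]) auto
  next
    case False
    have cphi: "continuous_on S (\<lambda>q. max \<bar>V q\<bar> (norm (G q)))"
      by (intro continuous_intros continuous_on_subset[OF cV] continuous_on_subset[OF cG]) auto
    obtain q0 where q0: "q0 \<in> S" "\<forall>y\<in>S. max \<bar>V q0\<bar> (norm (G q0)) \<le> max \<bar>V y\<bar> (norm (G y))"
      using continuous_attains_inf[OF cS False cphi] by blast
    have pos: "max \<bar>V q0\<bar> (norm (G q0)) > 0"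
    proof (rule ccontr)
      assume "\<not> ?thesis"
      then have "V q0 = 0" "G q0 = 0" by (auto simp: max_def split: if_splits)
      then have "q0 \<in> Z" unfolding Z_def by simp
      then show False using q0(1) eta unfolding S_def by force
    qed
    show ?thesis
    proof (intro exI[of _ "max \<bar>V q0\<bar> (norm (G q0)) / 2"] conjI ballI impI)
      show "max \<bar>V q0\<bar> (norm (G q0)) / 2 > 0" using pos by simp
      fix q assume q: "q \<in> K" "\<bar>V q\<bar> \<le> max \<bar>V q0\<bar> (norm (G q0)) / 2"
        "norm (G q) \<le> max \<bar>V q0\<bar> (norm (G q0)) / 2"
      have "q \<notin> S"
      proof
        assume "q \<in> S"
        then have "max \<bar>V q0\<bar> (norm (G q0)) \<le> max \<bar>V q\<bar> (norm (G q))" using q0 by blast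
        then show False using q pos by linarith
      qed
      then show "\<exists>m. V m = 0 \<and> G m = 0 \<and> norm (q - m) < \<eta>" using key q(1) by blast
    qed
  qed
qed
lemma quad_nonneg: "pos_def_mat D \<Longrightarrow> 0 \<le> v \<bullet> (D *v v)" for D :: "real^'n^'n"
  unfolding pos_def_mat_def by (cases "v = 0") (auto intro: less_imp_le)

lemma normD_sq: "pos_def_mat D \<Longrightarrow> (normD D v)^2 = v \<bullet> (D *v v)" for D :: "real^'n^'n"
  unfolding normD_def by (simp add: quad_nonneg)

lemma cont_normD: "continuous_on S (normD D)" for D :: "real^'n^'n"
  unfolding normD_def by (intro continuous_intros linear_continuous_on matrix_vector_mul_bounded_linear)

lemma normD_le:
  fixes D :: "real^'n^'n"
  assumes "pos_def_mat D" "b \<ge> 1" "\<And>v. norm (D *v v) \<le> b * norm v"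
  shows "normD D v \<le> b * norm v"
proof -
  have "v \<bullet> (D *v v) \<le> norm v * norm (D *v v)" by (rule norm_cauchy_schwarz)
  also have "\<dots> \<le> norm v * (b * norm v)" by (intro mult_left_mono assms(3)) simp
  also have "\<dots> \<le> (b * norm v)^2"
  proof -
    have X: "norm v * norm v \<le> b * (norm v * norm v)"
      using mult_right_mono[OF assms(2), of "norm v * norm v"] by simp
    then have "b * (norm v * norm v) \<le> b * (b * (norm v * norm v))" using assms(2) by (intro mult_left_mono) auto
    then show ?thesis by (simp add: power2_eq_square mult_ac)
  qed
  finally have "v \<bullet> (D *v v) \<le> (b * norm v)^2" .
  then show ?thesis unfolding normD_def using assms(2)
    by (metis norm_ge_zero real_sqrt_le_mono real_sqrt_unique zero_le_mult_iff zero_le_one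
        order_trans power2_eq_square)
qed

lemma D_lower:
  fixes D :: "real^'n^'n"
  assumes "a > 0" "\<And>v. a * (norm v)^2 \<le> v \<bullet> (D *v v)"
  shows "a * norm v \<le> norm (D *v v)"
proof (cases "v = 0")
  case True then show ?thesis by simp
next
  case False
  have "a * norm v * norm v \<le> norm v * norm (D *v v)"
    using assms(2)[of v] norm_cauchy_schwarz[of v "D *v v"] by (simp add: power2_eq_square)
  then show ?thesis using False by (simp add: mult.commute)
qed

theorem mainTheorem14:
  fixes D :: "real^'n^'n" and V :: "real^'n \<Rightarrow> real"
    and gradV :: "real^'n \<Rightarrow> real^'n" and HessV :: "real^'n \<Rightarrow> real^'n^'n"
    and dEsc :: real
  assumes "transpose D = D" and "pos_def_mat D"
    and "C2_with V gradV HessV"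
    and "H_coerc gradV" and "H_norm V HessV" and "H_only_min V gradV HessV"
    and "d_Esc_ok D V gradV HessV dEsc"
  shows "\<exists>\<delta>Ham>0. \<exists>\<delta>Lag>0. \<forall>(u::real \<Rightarrow> real^'n) u' u''.
           (\<forall>x. (u has_vector_derivative u' x) (at x)) \<longrightarrow>
           (\<forall>x. (u' has_vector_derivative u'' x) (at x)) \<longrightarrow>
           (\<forall>x. D *v u'' x = gradV (u x)) \<longrightarrow>
           (\<forall>x. \<bar>(normD D (u' x))\<^sup>2 / 2 - V (u x)\<bar> \<le> \<delta>Ham) \<longrightarrow>
           (\<forall>x0. {x0..x0+1} \<inter> Sigma_Esc D V gradV dEsc u \<noteq> {} \<longrightarrow>
              integral {x0..x0+1} (\<lambda>x. (normD D (u' x))\<^sup>2 / 2 + V (u x)) \<ge> \<delta>Lag)"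
proof -
  note pd = assms(2)
  have der: "\<And>u. (V has_derivative (\<lambda>h. gradV u \<bullet> h)) (at u)"
    and derG: "\<And>u. (gradV has_derivative (\<lambda>h. HessV u *v h)) (at u)"
    using assms(3) unfolding C2_with_def by blast+
  have dpos: "dEsc > 0" using assms(7) unfolding d_Esc_ok_def by blast
  have contV: "continuous_on UNIV V"
    using der has_derivative_continuous continuous_at_imp_continuous_on by blast
  have contG: "continuous_on UNIV gradV"
    using derG has_derivative_continuous continuous_at_imp_continuous_on by blast
  obtain a where a: "a > 0" "\<And>v. a * (norm v)^2 \<le> v \<bullet> (D *v v)"
    using posdef_lower[OF pd] by blast
  obtain b where b: "b \<ge> 1" "\<And>v. norm (D *v v) \<le> b * norm v"
    using upper_D[of D] by blast
  obtain R1 where R1: "\<And>q. V q < 1 \<Longrightarrow> norm q \<le> R1"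
    using sublevel_bounded[OF der assms(4)] by blast
  define K where "K = cball (0::real^'n) (R1 + 1)"
  have cK: "compact K" unfolding K_def by simp
  define \<eta> where "\<eta> = dEsc / b"
  have eta: "\<eta> > 0" unfolding \<eta>_def using dpos b(1) by simp
  obtain \<epsilon> where eps: "\<epsilon> > 0" "\<And>q. q \<in> K \<Longrightarrow> \<bar>V q\<bar> \<le> \<epsilon> \<Longrightarrow> norm (gradV q) \<le> \<epsilon> \<Longrightarrow>
            (\<exists>m. V m = 0 \<and> gradV m = 0 \<and> norm (q - m) < \<eta>)"
    using cpt_near[OF contV contG eta cK] by blast
  define \<epsilon>1 where "\<epsilon>1 = min \<epsilon> (a * \<epsilon>^2 / (32 * b^2))"
  have e1: "\<epsilon>1 > 0" "\<epsilon>1 \<le> \<epsilon>" "\<epsilon>1 \<le> a * \<epsilon>^2 / (32 * b^2)"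
    unfolding \<epsilon>1_def using eps(1) a(1) b(1) by auto
  define \<theta> where "\<theta> = a * \<epsilon> / (4 * b)"
  have th: "\<theta> > 0" unfolding \<theta>_def using eps(1) a(1) b(1) by simp
  have ucV: "uniformly_continuous_on K V"
    using compact_uniformly_continuous[OF continuous_on_subset[OF contV] cK] by simp
  have ucG: "uniformly_continuous_on K gradV"
    using compact_uniformly_continuous[OF continuous_on_subset[OF contG] cK] by simp
  obtain \<rho>V where rV: "\<rho>V > 0" "\<And>q q'. q \<in> K \<Longrightarrow> q' \<in> K \<Longrightarrow> dist q' q < \<rho>V \<Longrightarrow> dist (V q') (V q) < \<epsilon>1 / 4"
    using ucV[unfolded uniformly_continuous_on_def, rule_format, of "\<epsilon>1/4"] e1(1) by auto
  obtain \<rho>G where rG: "\<rho>G > 0" "\<And>q q'. q \<in> K \<Longrightarrow> q' \<in> K \<Longrightarrow> dist q' q < \<rho>G \<Longrightarrow> dist (gradV q') (gradV q) < \<theta>"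
    using ucG[unfolded uniformly_continuous_on_def, rule_format, of \<theta>] th by auto
  define \<rho> where "\<rho> = min 1 (min \<rho>V \<rho>G) / 2"
  have rho: "\<rho> > 0" "\<rho> \<le> 1/2" "\<rho> < \<rho>V" "\<rho> < \<rho>G" unfolding \<rho>_def using rV(1) rG(1) by auto
  define s where "s = min 1 (min (\<epsilon>1 / 4) (a * \<rho>^2))"
  have s: "s > 0" "s \<le> 1" "s \<le> \<epsilon>1 / 4" "s \<le> a * \<rho>^2"
    unfolding s_def using e1(1) a(1) rho(1) by auto
  define \<delta> where "\<delta> = s / 2"
  have dl: "\<delta> > 0" unfolding \<delta>_def using s by simp
  show ?thesis
  proof (intro exI[of _ \<delta>] conjI dl allI impI)
    fix u :: "real \<Rightarrow> real^'n" and w w' :: "real \<Rightarrow> real^'n" and x0 :: real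
    assume du: "\<forall>x. (u has_vector_derivative w x) (at x)"
      and dw: "\<forall>x. (w has_vector_derivative w' x) (at x)"
      and eq: "\<forall>x. D *v w' x = gradV (u x)"
      and ham: "\<forall>x. \<bar>(normD D (w x))\<^sup>2 / 2 - V (u x)\<bar> \<le> \<delta>"
      and esc: "{x0..x0+1} \<inter> Sigma_Esc D V gradV dEsc u \<noteq> {}"
    define I where "I = {x0..x0+1}"
    define L where "L = (\<lambda>x. (normD D (w x))\<^sup>2 / 2 + V (u x))"
    obtain xs where xs: "xs \<in> I" "\<forall>m\<in>M0 V gradV. normD D (u xs - m) > dEsc"
      using esc unfolding I_def Sigma_Esc_def by blast
    show "\<delta> \<le> integral {x0..x0+1} (\<lambda>x. (normD D (w x))\<^sup>2 / 2 + V (u x))"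
    proof (rule ccontr)
      assume "\<not> ?thesis"
      then have Ism: "integral I L < \<delta>" unfolding I_def L_def by simp
      have contu: "continuous_on UNIV u"
        using du has_vector_derivative_continuous continuous_at_imp_continuous_on by blast
      have contw: "continuous_on UNIV w"
        using dw has_vector_derivative_continuous continuous_at_imp_continuous_on by blast
      have cnw: "continuous_on UNIV (\<lambda>x. normD D (w x))"
        using continuous_on_compose2[OF cont_normD[of UNIV D] contw] by simp
      have cVu: "continuous_on UNIV (\<lambda>x. V (u x))"
        using continuous_on_compose2[OF contV contu] by simp
      have contL: "continuous_on I L" unfolding L_def
        by (intro continuous_intros continuous_on_subset[OF cnw] continuous_on_subset[OF cVu]) auto
      have intL: "L integrable_on I" unfolding I_def using contL[unfolded I_def]
        by (rule integrable_continuous_interval)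
      have nD: "(normD D (w x))^2 \<ge> a * (norm (w x))^2" for x
        using normD_sq[OF pd] a(2) by simp
      have hamx: "(normD D (w x))\<^sup>2 / 2 - V (u x) \<le> \<delta>" "- \<delta> \<le> (normD D (w x))\<^sup>2 / 2 - V (u x)" for x
        using ham[rule_format, of x] by (simp_all add: abs_le_iff)
      have Lw: "L x \<ge> a * (norm (w x))^2 - \<delta>" for x
        using hamx[of x] nD[of x] unfolding L_def by linarith
      have LV: "L x \<ge> 2 * V (u x) - \<delta>" for x
        using hamx[of x] unfolding L_def by linarith
      have Vlow: "V (u x) \<ge> - \<delta>" for x
        using hamx[of x] zero_le_power2[of "normD D (w x)"] by linarith
      have wpt: "norm (w x) \<le> (1 / (2 * a * \<rho>)) * L x + ((1 / (2 * a * \<rho>)) * \<delta> + \<rho> / 2)" for x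
      proof -
        have "(norm (w x) - \<rho>)^2 \<ge> 0" by simp
        moreover have "(norm (w x) - \<rho>)^2 = (norm (w x))^2 - 2 * \<rho> * norm (w x) + \<rho>^2"
          by (simp add: power2_eq_square algebra_simps)
        ultimately have "2 * \<rho> * norm (w x) \<le> (norm (w x))^2 + \<rho>^2" by linarith
        moreover have "(norm (w x))^2 \<le> (L x + \<delta>) / a" using Lw[of x] a(1) by (simp add: field_simps)
        ultimately have "2 * \<rho> * norm (w x) \<le> (L x + \<delta>) / a + \<rho>^2" by linarith
        then have "norm (w x) \<le> ((L x + \<delta>) / a + \<rho>^2) / (2 * \<rho>)"
          using rho(1) by (simp add: field_simps)
        also have "\<dots> = (1 / (2 * a * \<rho>)) * L x + ((1 / (2 * a * \<rho>)) * \<delta> + \<rho> / 2)"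
          using rho(1) a(1) by (simp add: field_simps power2_eq_square)
        finally show ?thesis .
      qed
      have intnw: "(\<lambda>x. norm (w x)) integrable_on I" unfolding I_def
        by (intro integrable_continuous_interval continuous_intros continuous_on_subset[OF contw]) auto
      have hc: "((\<lambda>x. (1 / (2 * a * \<rho>)) * \<delta> + \<rho> / 2) has_integral ((1 / (2 * a * \<rho>)) * \<delta> + \<rho> / 2)) I"
        using has_integral_const_real[of "(1 / (2 * a * \<rho>)) * \<delta> + \<rho> / 2" x0 "x0+1"] unfolding I_def
        by (simp add: content_real)
      have hasI: "((\<lambda>x. (1 / (2 * a * \<rho>)) * L x + ((1 / (2 * a * \<rho>)) * \<delta> + \<rho> / 2)) has_integral
               ((1 / (2 * a * \<rho>)) * integral I L + ((1 / (2 * a * \<rho>)) * \<delta> + \<rho> / 2))) I"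
        by (rule has_integral_add[OF has_integral_mult_right[OF integrable_integral[OF intL]] hc])
      have "integral I (\<lambda>x. norm (w x)) \<le> integral I (\<lambda>x. (1 / (2 * a * \<rho>)) * L x + ((1 / (2 * a * \<rho>)) * \<delta> + \<rho> / 2))"
        by (rule integral_le[OF intnw has_integral_integrable[OF hasI] wpt])
      also have "\<dots> = (1 / (2 * a * \<rho>)) * integral I L + ((1 / (2 * a * \<rho>)) * \<delta> + \<rho> / 2)"
        using hasI by (simp add: integral_unique)
      also have "\<dots> \<le> \<rho>"
      proof -
        have "(1 / (2 * a * \<rho>)) * integral I L \<le> (1 / (2 * a * \<rho>)) * \<delta>"
          using Ism a(1) rho(1) by (intro mult_left_mono) auto
        moreover have "(1 / (2 * a * \<rho>)) * (2 * \<delta>) \<le> \<rho> / 2"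
          using s(4) a(1) rho(1) unfolding \<delta>_def by (simp add: field_simps power2_eq_square)
        moreover have "(1 / (2 * a * \<rho>)) * (2 * \<delta>) = 2 * ((1 / (2 * a * \<rho>)) * \<delta>)" by simp
        ultimately show ?thesis by linarith
      qed
      finally have intw: "integral I (\<lambda>x. norm (w x)) \<le> \<rho>" .
      have close0: "norm (u y - u x) \<le> \<rho>" if "x \<in> I" "y \<in> I" "x \<le> y" for x y
      proof -
        have sub: "{x..y} \<subseteq> I" using that unfolding I_def by auto
        have "(w has_integral (u y - u x)) {x..y}"
          by (rule fundamental_theorem_of_calculus[OF that(3)])
             (use du in \<open>auto intro: has_vector_derivative_at_within\<close>)
        then have "u y - u x = integral {x..y} w" by (simp add: integral_unique)
        also have "norm \<dots> \<le> integral {x..y} (\<lambda>x. norm (w x))"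
          by (intro integral_norm_bound_integral integrable_continuous_interval continuous_intros
               continuous_on_subset[OF contw]) auto
        also have "\<dots> \<le> integral I (\<lambda>x. norm (w x))"
          by (intro integral_subset_le sub intnw integrable_continuous_interval continuous_intros
               continuous_on_subset[OF contw]) auto
        finally show ?thesis using intw by simp
      qed
      have close: "norm (u y - u x) \<le> \<rho>" if "x \<in> I" "y \<in> I" for x y
        using close0[OF that] close0[OF that(2,1)] by (metis norm_minus_commute linorder_linear)
      obtain x1 where x1: "x1 \<in> I" "V (u x1) < s"
      proof (rule ccontr)
        assume "\<not> thesis"
        then have big: "\<And>x. x \<in> I \<Longrightarrow> V (u x) \<ge> s" using that by force
        have "integral I (\<lambda>x. \<delta>) \<le> integral I L"
        proof (rule integral_le)
          show "(\<lambda>x. \<delta>) integrable_on I" unfolding I_def by (rule integrable_const_ivl)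
          show "L integrable_on I" by (rule intL)
          fix x assume "x \<in> I"
          then show "\<delta> \<le> L x" using big[of x] LV[of x] s(1) unfolding \<delta>_def by linarith
        qed
        moreover have "integral I (\<lambda>x. \<delta>) = \<delta>" unfolding I_def by (simp add: content_real)
        ultimately show False using Ism by simp
      qed
      have nx1: "norm (u x1) \<le> R1" using R1 x1(2) s(2) by simp
      have inK: "u x \<in> K" if "x \<in> I" for x
      proof -
        have "norm (u x) \<le> norm (u x1) + norm (u x - u x1)" by (rule norm_triangle_sub)
        then show ?thesis unfolding K_def using close[OF x1(1) that] nx1 rho(2) by simp
      qed
      define p where "p = u xs"
      have pK: "p \<in> K" unfolding p_def using inK xs(1) .
      have Vnear: "V (u x) - V p < \<epsilon>1 / 4 \<and> V p - V (u x) < \<epsilon>1 / 4" if "x \<in> I" for x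
      proof -
        have "dist (u x) p < \<rho>V" using close[OF xs(1) that] rho(3) unfolding p_def dist_norm by linarith
        then have "dist (V (u x)) (V p) < \<epsilon>1 / 4" by (rule rV(2)[OF pK inK[OF that]])
        then have "\<bar>V (u x) - V p\<bar> < \<epsilon>1 / 4" by (simp add: dist_real_def)
        then show ?thesis by (metis abs_less_iff minus_diff_eq)
      qed
      have Vp2: "V p \<le> \<epsilon>1 / 2" using Vnear[OF x1(1)] x1(2) s(3) by linarith
      have "V p \<ge> - \<delta>" unfolding p_def by (rule Vlow)
      then have Vp: "\<bar>V p\<bar> \<le> \<epsilon>" using Vp2 e1 s dl unfolding \<delta>_def by (simp add: abs_le_iff)
      have wsmall: "norm (w x) \<le> \<epsilon> / (4 * b)" if "x \<in> I" for x
      proof -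
        have "a * (norm (w x))^2 \<le> (normD D (w x))^2" using nD .
        also have "\<dots> \<le> 2 * (V (u x) + \<delta>)" using hamx(1)[of x] by (simp add: field_simps; linarith)
        also have "\<dots> \<le> 2 * \<epsilon>1" using conjunct1[OF Vnear[OF that]] Vp2 s(3) e1(1) unfolding \<delta>_def by (simp add: field_simps; linarith)
        also have "\<dots> \<le> a * (\<epsilon> / (4 * b))^2"
        proof -
          have "a * (\<epsilon> / (4 * b))^2 = 2 * (a * \<epsilon>^2 / (32 * b^2))" using b(1)
            by (simp add: field_simps power2_eq_square)
          then show ?thesis using e1(3) by linarith
        qed
        finally have "(norm (w x))^2 \<le> (\<epsilon> / (4 * b))^2" using a(1) by simp
        then show ?thesis using eps(1) b(1) by (simp add: power2_le_iff_abs_le)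
      qed
      define c where "c = w' xs"
      have wdiff: "norm (w' t - c) \<le> \<epsilon> / (4 * b)" if "t \<in> I" for t
      proof -
        have "a * norm (w' t - c) \<le> norm (D *v (w' t - c))" by (rule D_lower[OF a])
        also have "\<dots> = norm (gradV (u t) - gradV p)"
          using eq unfolding c_def p_def by (simp add: matrix_vector_mult_diff_distrib)
        also have "\<dots> < \<theta>"
        proof -
          have "dist (u t) p < \<rho>G" using close[OF xs(1) that] rho(4) unfolding p_def dist_norm by linarith
          then have "dist (gradV (u t)) (gradV p) < \<theta>" by (rule rG(2)[OF pK inK[OF that]])
          then show ?thesis by (simp add: dist_norm)
        qed
        also have "\<theta> = a * (\<epsilon> / (4 * b))" unfolding \<theta>_def by simp
        finally have "a * norm (w' t - c) < a * (\<epsilon> / (4 * b))" .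
        then show ?thesis using a(1) by (metis less_imp_le mult_less_cancel_left_pos)
      qed
      have gder: "((\<lambda>t. w t - t *\<^sub>R c) has_derivative (\<lambda>h. h *\<^sub>R (w' t - c))) (at t within I)" for t
      proof -
        have "(w has_derivative (\<lambda>h. h *\<^sub>R w' t)) (at t)"
          using dw by (simp add: has_vector_derivative_def)
        moreover have "((\<lambda>t. t *\<^sub>R c) has_derivative (\<lambda>h. h *\<^sub>R c)) (at t)"
          by (rule has_derivative_scaleR_left[OF has_derivative_ident])
        ultimately have "((\<lambda>t. w t - t *\<^sub>R c) has_derivative (\<lambda>h. h *\<^sub>R w' t - h *\<^sub>R c)) (at t)"
          by (rule has_derivative_diff)
        then have "((\<lambda>t. w t - t *\<^sub>R c) has_derivative (\<lambda>h. h *\<^sub>R (w' t - c))) (at t)"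
          by (simp add: scaleR_diff_right)
        then show ?thesis by (rule has_derivative_at_withinI)
      qed
      have onb: "onorm (\<lambda>h. h *\<^sub>R (w' t - c)) \<le> \<epsilon> / (4 * b)" if "t \<in> I" for t
      proof -
        have "onorm (\<lambda>h::real. h *\<^sub>R (w' t - c)) = onorm (\<lambda>h::real. h) * norm (w' t - c)"
          by (rule onorm_scaleR_left[OF bounded_linear_ident])
        then have "onorm (\<lambda>h::real. h *\<^sub>R (w' t - c)) = norm (w' t - c)" by (simp add: onorm_id)
        then show ?thesis using wdiff[OF that] by simp
      qed
      have x0I: "x0 \<in> I" and x1I: "x0 + 1 \<in> I" unfolding I_def by auto
      have "norm ((w (x0+1) - (x0+1) *\<^sub>R c) - (w x0 - x0 *\<^sub>R c)) \<le> \<epsilon> / (4 * b) * norm ((x0+1) - x0)"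
        by (rule differentiable_bound[OF _ gder onb x1I x0I]) (simp add: I_def)
      moreover have "(w (x0+1) - (x0+1) *\<^sub>R c) - (w x0 - x0 *\<^sub>R c) = w (x0+1) - w x0 - c"
        by (simp add: algebra_simps)
      ultimately have n1: "norm (w (x0+1) - w x0 - c) \<le> \<epsilon> / (4 * b)" by simp
      have "norm c \<le> norm (w (x0+1) - w x0) + norm (w (x0+1) - w x0 - c)"
        using norm_triangle_ineq4[of "w (x0+1) - w x0" "w (x0+1) - w x0 - c"] by simp
      moreover have "norm (w (x0+1) - w x0) \<le> norm (w (x0+1)) + norm (w x0)"
        by (rule norm_triangle_ineq4)
      ultimately have "norm c \<le> norm (w (x0+1)) + norm (w x0) + \<epsilon> / (4 * b)" using n1 by linarith
      also have "\<dots> \<le> 3 * (\<epsilon> / (4 * b))" using wsmall[OF x0I] wsmall[OF x1I] by simp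
      finally have nc: "norm c \<le> 3 * (\<epsilon> / (4 * b))" .
      have "norm (gradV p) = norm (D *v c)" using eq unfolding c_def p_def by simp
      also have "\<dots> \<le> b * norm c" by (rule b(2))
      also have "\<dots> \<le> b * (3 * (\<epsilon> / (4 * b)))" using nc b(1) by (intro mult_left_mono) auto
      also have "\<dots> \<le> \<epsilon>" using b(1) eps(1) by (simp add: field_simps)
      finally have Gp: "norm (gradV p) \<le> \<epsilon>" .
      obtain m where m: "V m = 0" "gradV m = 0" "norm (p - m) < \<eta>" using eps(2)[OF pK Vp Gp] by blast
      have mM: "m \<in> M0 V gradV" using m unfolding M0_def by simp
      have "normD D (p - m) \<le> b * norm (p - m)" by (rule normD_le[OF pd b])
      also have "\<dots> < b * \<eta>" using m(3) b(1) by simp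
      also have "\<dots> = dEsc" unfolding \<eta>_def using b(1) by simp
      finally have "normD D (p - m) < dEsc" .
      with xs(2) mM show False unfolding p_def by fastforce
    qed
  qed
qed

end
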